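(* Let $P$ and $Q$ be posets such that $\Sigma P$ and $\Sigma Q$ are $\omega$ type spaces. Then the product topology of $\Sigma\sigma(P)$ and $\Sigma\sigma(Q)$ coincides with the Scott topology of the product poset $\sigma(P)\times\sigma(Q)$, i.e. $\Sigma\sigma(P)\times\Sigma\sigma(Q)=\Sigma(\sigma(P)\times\sigma(Q))$.
   Context: For a poset $P$, $\sigma(P)$ is the set of Scott open subsets of $P$ (a set $U$ is Scott open iff it is an upper set and for every directed $D$ whose supremum exists, $\bigvee D\in U$ implies $D\cap U\neq\emptyset$), and $\Sigma P=(P,\sigma(P))$. $\sigma(P)$ is ordered by inclusion, $\Sigma\sigma(P)$ is this poset with its Scott topology, and $\sigma(P)\times\sigma(Q)$ carries the coordinatewise order. A topological space is an $\omega$ type space if it has a subbase consisting of countable subsets. *)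

theory Defs
  imports "HOL-Analysis.Analysis"
begin

definition poset_on :: "'a set \<Rightarrow> ('a \<Rightarrow> 'a \<Rightarrow> bool) \<Rightarrow> bool" where
  "poset_on A le \<longleftrightarrow>
     (\<forall>x\<in>A. le x x) \<and>
     (\<forall>x\<in>A. \<forall>y\<in>A. le x y \<and> le y x \<longrightarrow> x = y) \<and>
     (\<forall>x\<in>A. \<forall>y\<in>A. \<forall>z\<in>A. le x y \<and> le y z \<longrightarrow> le x z)"

definition directed_in :: "'a set \<Rightarrow> ('a \<Rightarrow> 'a \<Rightarrow> bool) \<Rightarrow> 'a set \<Rightarrow> bool" where
  "directed_in A le D \<longleftrightarrow>
     D \<noteq> {} \<and> D \<subseteq> A \<and> (\<forall>x\<in>D. \<forall>y\<in>D. \<exists>z\<in>D. le x z \<and> le y z)"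

definition is_sup_in :: "'a set \<Rightarrow> ('a \<Rightarrow> 'a \<Rightarrow> bool) \<Rightarrow> 'a set \<Rightarrow> 'a \<Rightarrow> bool" where
  "is_sup_in A le D s \<longleftrightarrow>
     s \<in> A \<and> (\<forall>d\<in>D. le d s) \<and> (\<forall>u\<in>A. (\<forall>d\<in>D. le d u) \<longrightarrow> le s u)"

definition scott_open_in :: "'a set \<Rightarrow> ('a \<Rightarrow> 'a \<Rightarrow> bool) \<Rightarrow> 'a set \<Rightarrow> bool" where
  "scott_open_in A le U \<longleftrightarrow>
     U \<subseteq> A \<and>
     (\<forall>x\<in>U. \<forall>y\<in>A. le x y \<longrightarrow> y \<in> U) \<and>
     (\<forall>D s. directed_in A le D \<and> is_sup_in A le D s \<and> s \<in> U \<longrightarrow> D \<inter> U \<noteq> {})"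

definition scott_opens :: "'a set \<Rightarrow> ('a \<Rightarrow> 'a \<Rightarrow> bool) \<Rightarrow> 'a set set" where
  "scott_opens A le = {U. scott_open_in A le U}"

definition scott_topology :: "'a set \<Rightarrow> ('a \<Rightarrow> 'a \<Rightarrow> bool) \<Rightarrow> 'a topology" where
  "scott_topology A le = topology (scott_open_in A le)"

definition prod_le :: "('a \<Rightarrow> 'a \<Rightarrow> bool) \<Rightarrow> ('b \<Rightarrow> 'b \<Rightarrow> bool) \<Rightarrow> 'a \<times> 'b \<Rightarrow> 'a \<times> 'b \<Rightarrow> bool" where
  "prod_le le1 le2 p q \<longleftrightarrow> le1 (fst p) (fst q) \<and> le2 (snd p) (snd q)"

definition omega_type :: "'a topology \<Rightarrow> bool" where
  "omega_type X \<longleftrightarrow> (\<exists>S. (\<forall>s\<in>S. countable s) \<and> X = topology_generated_by S)"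

end

theory Submission
  imports Defs
begin

lemma scott_upper: "scott_open_in A le U \<Longrightarrow> x \<in> U \<Longrightarrow> y \<in> A \<Longrightarrow> le x y \<Longrightarrow> y \<in> U"
  unfolding scott_open_in_def by blast

lemma scott_sub: "scott_open_in A le U \<Longrightarrow> U \<subseteq> A"
  unfolding scott_open_in_def by blast

lemma scott_dir: "scott_open_in A le U \<Longrightarrow> directed_in A le D \<Longrightarrow> is_sup_in A le D s \<Longrightarrow> s \<in> U \<Longrightarrow> \<exists>d\<in>D. d \<in> U"
  unfolding scott_open_in_def by blast

lemma scott_openI:
  assumes "U \<subseteq> A" "\<And>x y. x \<in> U \<Longrightarrow> y \<in> A \<Longrightarrow> le x y \<Longrightarrow> y \<in> U"
    "\<And>D s. directed_in A le D \<Longrightarrow> is_sup_in A le D s \<Longrightarrow> s \<in> U \<Longrightarrow> \<exists>d\<in>D. d \<in> U"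
  shows "scott_open_in A le U"
  unfolding scott_open_in_def using assms by blast

lemma istop_scott: "istopology (scott_open_in A le)"
  unfolding istopology_def
proof (intro conjI allI impI ballI)
  fix S T assume S: "scott_open_in A le S" and T: "scott_open_in A le T"
  show "scott_open_in A le (S \<inter> T)"
  proof (rule scott_openI)
    show "S \<inter> T \<subseteq> A" using scott_sub[OF S] by blast
  next
    fix x y assume "x \<in> S \<inter> T" "y \<in> A" "le x y"
    then show "y \<in> S \<inter> T" using scott_upper[OF S _ \<open>y \<in> A\<close> \<open>le x y\<close>] scott_upper[OF T _ \<open>y \<in> A\<close> \<open>le x y\<close>] by blast
  next
    fix D s assume H1: "directed_in A le D" and H2: "is_sup_in A le D s" and H3: "s \<in> S \<inter> T"
    obtain d1 where d1: "d1 \<in> D" "d1 \<in> S" using scott_dir[OF S H1 H2] H3 by blast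
    obtain d2 where d2: "d2 \<in> D" "d2 \<in> T" using scott_dir[OF T H1 H2] H3 by blast
    obtain z where z: "z \<in> D" "le d1 z" "le d2 z" using H1 d1(1) d2(1) unfolding directed_in_def by blast
    have "z \<in> A" using H1 z(1) unfolding directed_in_def by blast
    then show "\<exists>d\<in>D. d \<in> S \<inter> T" using scott_upper[OF S d1(2) \<open>z \<in> A\<close> z(2)] scott_upper[OF T d2(2) \<open>z \<in> A\<close> z(3)] z(1) by blast
  qed
next
  fix K assume K: "\<forall>S\<in>K. scott_open_in A le S"
  show "scott_open_in A le (\<Union>K)"
  proof (rule scott_openI)
    show "\<Union>K \<subseteq> A" using K scott_sub by (metis Sup_least)
  next
    fix x y assume "x \<in> \<Union>K" "y \<in> A" "le x y"
    then obtain S where "S \<in> K" "x \<in> S" by blast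
    then have "scott_open_in A le S" using K by blast
    then have "y \<in> S" using scott_upper \<open>x \<in> S\<close> \<open>y \<in> A\<close> \<open>le x y\<close> by metis
    then show "y \<in> \<Union>K" using \<open>S \<in> K\<close> by blast
  next
    fix D s assume H1: "directed_in A le D" and H2: "is_sup_in A le D s" and H3: "s \<in> \<Union>K"
    then obtain S where "S \<in> K" "s \<in> S" by blast
    then have "scott_open_in A le S" using K by blast
    then obtain d where "d \<in> D" "d \<in> S" using scott_dir[OF _ H1 H2 \<open>s \<in> S\<close>] by blast
    then show "\<exists>d\<in>D. d \<in> \<Union>K" using \<open>S \<in> K\<close> by blast
  qed
qed

lemma openin_scott: "openin (scott_topology A le) = scott_open_in A le"
  by (simp add: scott_topology_def istop_scott)

lemma scott_open_whole: "scott_open_in A le A"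
  unfolding scott_open_in_def directed_in_def by blast

lemma topspace_scott: "topspace (scott_topology A le) = A"
  unfolding topspace_def openin_scott using scott_open_whole[of A le] scott_sub[of A le]
  by blast

lemma dir1:
  assumes "openin (prod_topology (scott_topology A leA) (scott_topology B leB)) W"
  shows "scott_open_in (A \<times> B) (prod_le leA leB) W"
proof -
  have alt: "\<And>x y. (x,y) \<in> W \<Longrightarrow> \<exists>U V. scott_open_in A leA U \<and> scott_open_in B leB V \<and> x \<in> U \<and> y \<in> V \<and> U \<times> V \<subseteq> W"
    using assms unfolding openin_prod_topology_alt openin_scott by blast
  have sub: "W \<subseteq> A \<times> B"
    using openin_subset[OF assms] by (simp add: topspace_scott)
  show ?thesis unfolding scott_open_in_def
  proof (intro conjI allI impI ballI sub)
    fix p q assume p: "p \<in> W" and q: "q \<in> A \<times> B" and le: "prod_le leA leB p q"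
    obtain U V where UV: "scott_open_in A leA U" "scott_open_in B leB V" "fst p \<in> U" "snd p \<in> V" "U \<times> V \<subseteq> W"
      using alt[of "fst p" "snd p"] p by auto
    have "fst q \<in> U" using scott_upper[OF UV(1) UV(3)] le q unfolding prod_le_def by auto
    moreover have "snd q \<in> V" using scott_upper[OF UV(2) UV(4)] le q unfolding prod_le_def by auto
    ultimately have "q \<in> U \<times> V" by (simp add: mem_Times_iff)
    then show "q \<in> W" using UV(5) by blast
  next
    fix D s assume H: "directed_in (A \<times> B) (prod_le leA leB) D \<and> is_sup_in (A \<times> B) (prod_le leA leB) D s \<and> s \<in> W"
    obtain U V where UV: "scott_open_in A leA U" "scott_open_in B leB V" "fst s \<in> U" "snd s \<in> V" "U \<times> V \<subseteq> W"
      using alt[of "fst s" "snd s"] H by auto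
    have Dd: "D \<noteq> {}" "D \<subseteq> A \<times> B" "\<forall>x\<in>D. \<forall>y\<in>D. \<exists>z\<in>D. prod_le leA leB x z \<and> prod_le leA leB y z"
      using H unfolding directed_in_def by blast+
    have dir1: "directed_in A leA (fst ` D)"
      unfolding directed_in_def
    proof (intro conjI)
      show "fst ` D \<noteq> {}" using Dd by auto
      show "fst ` D \<subseteq> A" using Dd by auto
      show "\<forall>x\<in>fst ` D. \<forall>y\<in>fst ` D. \<exists>z\<in>fst ` D. leA x z \<and> leA y z"
      proof (intro ballI)
        fix x y assume "x \<in> fst ` D" "y \<in> fst ` D"
        then obtain x' y' where "x' \<in> D" "y' \<in> D" "x = fst x'" "y = fst y'" by blast
        then show "\<exists>z\<in>fst ` D. leA x z \<and> leA y z" using Dd(3) unfolding prod_le_def by blast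
      qed
    qed
    have dir2: "directed_in B leB (snd ` D)"
      unfolding directed_in_def
    proof (intro conjI)
      show "snd ` D \<noteq> {}" using Dd by auto
      show "snd ` D \<subseteq> B" using Dd by auto
      show "\<forall>x\<in>snd ` D. \<forall>y\<in>snd ` D. \<exists>z\<in>snd ` D. leB x z \<and> leB y z"
      proof (intro ballI)
        fix x y assume "x \<in> snd ` D" "y \<in> snd ` D"
        then obtain x' y' where "x' \<in> D" "y' \<in> D" "x = snd x'" "y = snd y'" by blast
        then show "\<exists>z\<in>snd ` D. leB x z \<and> leB y z" using Dd(3) unfolding prod_le_def by blast
      qed
    qed
    have s: "s \<in> A \<times> B" "\<forall>d\<in>D. prod_le leA leB d s"
      "\<forall>u\<in>A \<times> B. (\<forall>d\<in>D. prod_le leA leB d u) \<longrightarrow> prod_le leA leB s u"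
      using H unfolding is_sup_in_def by blast+
    have sup1: "is_sup_in A leA (fst ` D) (fst s)"
      unfolding is_sup_in_def
    proof (intro conjI ballI impI)
      show "fst s \<in> A" using s by auto
      show "\<And>d. d \<in> fst ` D \<Longrightarrow> leA d (fst s)" using s by (auto simp: prod_le_def)
      fix u assume u: "u \<in> A" "\<forall>d\<in>fst ` D. leA d u"
      have "prod_le leA leB s (u, snd s)"
        using s u by (intro s(3)[rule_format]) (auto simp: prod_le_def)
      then show "leA (fst s) u" by (simp add: prod_le_def)
    qed
    have sup2: "is_sup_in B leB (snd ` D) (snd s)"
      unfolding is_sup_in_def
    proof (intro conjI ballI impI)
      show "snd s \<in> B" using s by auto
      show "\<And>d. d \<in> snd ` D \<Longrightarrow> leB d (snd s)" using s by (auto simp: prod_le_def)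
      fix u assume u: "u \<in> B" "\<forall>d\<in>snd ` D. leB d u"
      have "prod_le leA leB s (fst s, u)"
        using s u by (intro s(3)[rule_format]) (auto simp: prod_le_def)
      then show "leB (snd s) u" by (simp add: prod_le_def)
    qed
    obtain d1 where d1: "d1 \<in> D" "fst d1 \<in> U" using scott_dir[OF UV(1) dir1 sup1 UV(3)] by blast
    obtain d2 where d2: "d2 \<in> D" "snd d2 \<in> V" using scott_dir[OF UV(2) dir2 sup2 UV(4)] by blast
    obtain z where z: "z \<in> D" "prod_le leA leB d1 z" "prod_le leA leB d2 z"
      using H d1 d2 unfolding directed_in_def by blast
    have zAB: "z \<in> A \<times> B" using H z unfolding directed_in_def by blast
    have "fst z \<in> U" using scott_upper[OF UV(1) d1(2)] z zAB unfolding prod_le_def by auto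
    moreover have "snd z \<in> V" using scott_upper[OF UV(2) d2(2)] z zAB unfolding prod_le_def by auto
    ultimately have "z \<in> U \<times> V" by (simp add: mem_Times_iff)
    then have "z \<in> W" using UV(5) by blast
    then show "D \<inter> W \<noteq> {}" using z by blast
  qed
qed


lemma L_union: "\<D> \<subseteq> scott_opens A le \<Longrightarrow> \<Union>\<D> \<in> scott_opens A le"
  using istop_scott[of A le] unfolding istopology_def scott_opens_def by blast

lemma L_empty: "{} \<in> scott_opens A le"
  using L_union[of "{}" A le] by simp

lemma L_Un: "X \<in> scott_opens A le \<Longrightarrow> Y \<in> scott_opens A le \<Longrightarrow> X \<union> Y \<in> scott_opens A le"
  using L_union[of "{X, Y}" A le] by simp

lemma fin_directed_union:
  assumes dir: "directed_in L (\<subseteq>) \<D>" and fin: "finite F" and sub: "F \<subseteq> \<Union>\<D>"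
  shows "\<exists>X\<in>\<D>. F \<subseteq> X"
  using fin sub
proof (induction F rule: finite_induct)
  case empty
  then show ?case using dir unfolding directed_in_def by auto
next
  case (insert x F)
  then obtain X where X: "X \<in> \<D>" "F \<subseteq> X" by blast
  obtain X' where X': "X' \<in> \<D>" "x \<in> X'" using insert.prems by blast
  obtain Z where Z: "Z \<in> \<D>" "X \<subseteq> Z" "X' \<subseteq> Z" using dir X(1) X'(1) unfolding directed_in_def by blast
  show ?case using Z X X' by blast
qed

lemma fin_ub:
  assumes po: "poset_on A le" and dir: "directed_in A le D" and fin: "finite F" and sub: "F \<subseteq> D"
  shows "\<exists>z\<in>D. \<forall>x\<in>F. le x z"
  using fin sub
proof (induction F rule: finite_induct)
  case empty
  then show ?case using dir unfolding directed_in_def by blast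
next
  case (insert x F)
  then obtain z where z: "z \<in> D" "\<forall>y\<in>F. le y z" by blast
  have xD: "x \<in> D" using insert.prems by blast
  obtain z' where z': "z' \<in> D" "le x z'" "le z z'" using dir z(1) xD unfolding directed_in_def by blast
  have DA: "D \<subseteq> A" using dir unfolding directed_in_def by blast
  have tr: "\<And>a b c. a \<in> A \<Longrightarrow> b \<in> A \<Longrightarrow> c \<in> A \<Longrightarrow> le a b \<Longrightarrow> le b c \<Longrightarrow> le a c"
    using po unfolding poset_on_def by blast
  have "\<forall>y\<in>F. le y z'"
  proof
    fix y assume y: "y \<in> F"
    then have "y \<in> A" using insert.prems DA by blast
    moreover have "z \<in> A" "z' \<in> A" using z(1) z'(1) DA by blast+
    ultimately show "le y z'" using tr[of y z z'] z(2) y z'(3) by blast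
  qed
  then show ?case using z' by blast
qed

lemma sup_union:
  assumes "\<D> \<subseteq> scott_opens A le" and "is_sup_in (scott_opens A le) (\<subseteq>) \<D> S"
  shows "S = \<Union>\<D>"
proof -
  have "\<Union>\<D> \<in> scott_opens A le" using L_union[OF assms(1)] .
  then have "S \<subseteq> \<Union>\<D>" using assms(2) unfolding is_sup_in_def by blast
  moreover have "\<Union>\<D> \<subseteq> S" using assms(2) unfolding is_sup_in_def by blast
  ultimately show ?thesis by blast
qed

lemma nbhd_open:
  assumes fin: "finite F"
  shows "scott_open_in (scott_opens A le) (\<subseteq>) {X \<in> scott_opens A le. F \<subseteq> X}"
proof (rule scott_openI)
  show "{X \<in> scott_opens A le. F \<subseteq> X} \<subseteq> scott_opens A le" by blast
next
  fix X Y assume "X \<in> {X \<in> scott_opens A le. F \<subseteq> X}" "Y \<in> scott_opens A le" "X \<subseteq> Y"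
  then show "Y \<in> {X \<in> scott_opens A le. F \<subseteq> X}" by blast
next
  fix \<D> S assume dir: "directed_in (scott_opens A le) (\<subseteq>) \<D>"
    and sup: "is_sup_in (scott_opens A le) (\<subseteq>) \<D> S" and S: "S \<in> {X \<in> scott_opens A le. F \<subseteq> X}"
  have sub: "\<D> \<subseteq> scott_opens A le" using dir unfolding directed_in_def by blast
  have "S = \<Union>\<D>" using sup_union[OF sub sup] .
  then have "F \<subseteq> \<Union>\<D>" using S by blast
  then obtain X where "X \<in> \<D>" "F \<subseteq> X" using fin_directed_union[OF dir fin] by blast
  then show "\<exists>d\<in>\<D>. d \<in> {X \<in> scott_opens A le. F \<subseteq> X}" using sub by blast
qed

lemma prod_sup:
  assumes "\<D> \<subseteq> scott_opens A leA \<times> scott_opens B leB"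
  shows "is_sup_in (scott_opens A leA \<times> scott_opens B leB) (prod_le (\<subseteq>) (\<subseteq>)) \<D> (\<Union>(fst ` \<D>), \<Union>(snd ` \<D>))"
proof -
  have "fst ` \<D> \<subseteq> scott_opens A leA" "snd ` \<D> \<subseteq> scott_opens B leB" using assms by auto
  then have "\<Union>(fst ` \<D>) \<in> scott_opens A leA" "\<Union>(snd ` \<D>) \<in> scott_opens B leB"
    using L_union by blast+
  then show ?thesis unfolding is_sup_in_def prod_le_def by auto
qed

definition Fn :: "'a set \<Rightarrow> nat \<Rightarrow> 'a set" where
  "Fn C n = {x \<in> C. to_nat_on C x < n}"

lemma Fn_finite: "countable C \<Longrightarrow> finite (Fn C n)"
proof -
  assume c: "countable C"
  have "inj_on (to_nat_on C) (Fn C n)"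
    using inj_on_to_nat_on[OF c] unfolding Fn_def by (rule inj_on_subset) blast
  moreover have "to_nat_on C ` Fn C n \<subseteq> {..<n}" unfolding Fn_def by auto
  ultimately show ?thesis using inj_on_finite by blast
qed

lemma Fn_sub: "Fn C n \<subseteq> C" unfolding Fn_def by blast

lemma Fn_mem: "a \<in> C \<Longrightarrow> n \<ge> Suc (to_nat_on C a) \<Longrightarrow> a \<in> Fn C n"
  unfolding Fn_def by simp

lemma Zopen:
  assumes po: "poset_on P le" and C: "C \<in> scott_opens P le" "countable C"
    and X: "\<And>n. X n \<in> scott_opens P le" "\<And>n. Fn C n \<subseteq> X n"
  shows "{a \<in> C. \<forall>n\<ge>k. a \<in> X n} \<in> scott_opens P le"
  unfolding scott_opens_def mem_Collect_eq
proof (rule scott_openI)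
  have Co: "scott_open_in P le C" using C unfolding scott_opens_def by blast
  have Xo: "\<And>n. scott_open_in P le (X n)" using X unfolding scott_opens_def by blast
  show "{a \<in> C. \<forall>n\<ge>k. a \<in> X n} \<subseteq> P" using scott_sub[OF Co] by blast
next
  have Co: "scott_open_in P le C" using C unfolding scott_opens_def by blast
  have Xo: "\<And>n. scott_open_in P le (X n)" using X unfolding scott_opens_def by blast
  fix x y assume x: "x \<in> {a \<in> C. \<forall>n\<ge>k. a \<in> X n}" and y: "y \<in> P" and le: "le x y"
  have "y \<in> C" using scott_upper[OF Co _ y le] x by blast
  moreover have "\<forall>n\<ge>k. y \<in> X n"
  proof (intro allI impI)
    fix n assume "k \<le> n"
    then have "x \<in> X n" using x by blast
    then show "y \<in> X n" using scott_upper[OF Xo[of n] _ y le] by blast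
  qed
  ultimately show "y \<in> {a \<in> C. \<forall>n\<ge>k. a \<in> X n}" by blast
next
  have Co: "scott_open_in P le C" using C unfolding scott_opens_def by blast
  have Xo: "\<And>n. scott_open_in P le (X n)" using X unfolding scott_opens_def by blast
  fix D s assume dir: "directed_in P le D" and sup: "is_sup_in P le D s"
    and s: "s \<in> {a \<in> C. \<forall>n\<ge>k. a \<in> X n}"
  have DP: "D \<subseteq> P" using dir unfolding directed_in_def by blast
  have sC: "s \<in> C" using s by blast
  obtain d0 where d0: "d0 \<in> D" "d0 \<in> C" using scott_dir[OF Co dir sup sC] by blast
  define N where "N = Suc (to_nat_on C d0)"
  have hN: "\<And>n. n \<ge> N \<Longrightarrow> d0 \<in> X n"
  proof -
    fix n assume "n \<ge> N"
    then have "d0 \<in> Fn C n" using Fn_mem[OF d0(2)] unfolding N_def by blast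
    then show "d0 \<in> X n" using X(2)[of n] by blast
  qed
  have "\<forall>n\<in>{k..<N}. \<exists>d\<in>D. d \<in> X n"
  proof
    fix n assume "n \<in> {k..<N}"
    then have "s \<in> X n" using s by auto
    then show "\<exists>d\<in>D. d \<in> X n" using scott_dir[OF Xo[of n] dir sup] by blast
  qed
  then obtain dd where dd: "\<forall>n\<in>{k..<N}. dd n \<in> D \<and> dd n \<in> X n" by metis
  define F where "F = insert d0 (dd ` {k..<N})"
  have "finite F" unfolding F_def by blast
  moreover have "F \<subseteq> D" unfolding F_def using d0 dd by blast
  ultimately obtain z where z: "z \<in> D" "\<forall>x\<in>F. le x z" using fin_ub[OF po dir] by metis
  have zP: "z \<in> P" using z(1) DP by blast
  have "z \<in> C" using scott_upper[OF Co d0(2) zP] z(2) unfolding F_def by blast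
  moreover have "\<forall>n\<ge>k. z \<in> X n"
  proof (intro allI impI)
    fix n assume kn: "k \<le> n"
    show "z \<in> X n"
    proof (cases "n \<ge> N")
      case True
      then have "d0 \<in> X n" using hN by blast
      moreover have "le d0 z" using z(2) unfolding F_def by blast
      ultimately show ?thesis using scott_upper[OF Xo[of n] _ zP] by blast
    next
      case False
      then have "n \<in> {k..<N}" using kn by auto
      then have "dd n \<in> X n" "le (dd n) z" using dd z(2) unfolding F_def by blast+
      then show ?thesis using scott_upper[OF Xo[of n] _ zP] by blast
    qed
  qed
  ultimately show "\<exists>d\<in>D. d \<in> {a \<in> C. \<forall>n\<ge>k. a \<in> X n}" using z(1) by blast
qed


lemma rect:
  assumes poP: "poset_on P leP" and poQ: "poset_on Q leQ"
    and W: "scott_open_in (scott_opens P leP \<times> scott_opens Q leQ) (prod_le (\<subseteq>) (\<subseteq>)) W"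
    and C: "C \<in> scott_opens P leP" "countable C"
    and C': "C' \<in> scott_opens Q leQ" "countable C'"
    and CW: "(C, C') \<in> W"
  shows "\<exists>n. {X \<in> scott_opens P leP. Fn C n \<subseteq> X} \<times> {Y \<in> scott_opens Q leQ. Fn C' n \<subseteq> Y} \<subseteq> W"
proof (rule ccontr)
  assume nt: "\<not> ?thesis"
  have ex: "\<forall>n. \<exists>XY. fst XY \<in> scott_opens P leP \<and> Fn C n \<subseteq> fst XY \<and> snd XY \<in> scott_opens Q leQ \<and> Fn C' n \<subseteq> snd XY \<and> XY \<notin> W"
  proof
    fix n
    have "\<not> ({X \<in> scott_opens P leP. Fn C n \<subseteq> X} \<times> {Y \<in> scott_opens Q leQ. Fn C' n \<subseteq> Y} \<subseteq> W)"
      using nt by blast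
    then obtain p where p: "p \<in> {X \<in> scott_opens P leP. Fn C n \<subseteq> X} \<times> {Y \<in> scott_opens Q leQ. Fn C' n \<subseteq> Y}" "p \<notin> W"
      by blast
    have "fst p \<in> scott_opens P leP \<and> Fn C n \<subseteq> fst p \<and> snd p \<in> scott_opens Q leQ \<and> Fn C' n \<subseteq> snd p"
      using p(1) by (simp add: mem_Times_iff)
    then show "\<exists>XY. fst XY \<in> scott_opens P leP \<and> Fn C n \<subseteq> fst XY \<and> snd XY \<in> scott_opens Q leQ \<and> Fn C' n \<subseteq> snd XY \<and> XY \<notin> W"
      using p(2) by blast
  qed
  from choice[OF ex] obtain XY where XY: "\<forall>n. fst (XY n) \<in> scott_opens P leP \<and> Fn C n \<subseteq> fst (XY n) \<and> snd (XY n) \<in> scott_opens Q leQ \<and> Fn C' n \<subseteq> snd (XY n) \<and> XY n \<notin> W"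
    by blast
  define X where "X n = fst (XY n)" for n
  define Y where "Y n = snd (XY n)" for n
  have X1: "\<And>n. X n \<in> scott_opens P leP" and X2: "\<And>n. Fn C n \<subseteq> X n"
    and Y1: "\<And>n. Y n \<in> scott_opens Q leQ" and Y2: "\<And>n. Fn C' n \<subseteq> Y n"
    and XYW: "\<And>n. (X n, Y n) \<notin> W"
    using XY unfolding X_def Y_def by simp_all
  define Z where "Z k = {a \<in> C. \<forall>n\<ge>k. a \<in> X n}" for k
  define T where "T k = {a \<in> C'. \<forall>n\<ge>k. a \<in> Y n}" for k
  have Z1: "\<And>k. Z k \<in> scott_opens P leP" unfolding Z_def using Zopen[OF poP C X1 X2] .
  have T1: "\<And>k. T k \<in> scott_opens Q leQ" unfolding T_def using Zopen[OF poQ C' Y1 Y2] .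
  have ZT: "\<And>k. (Z k, T k) \<notin> W"
  proof
    fix k assume "(Z k, T k) \<in> W"
    moreover have "(X k, Y k) \<in> scott_opens P leP \<times> scott_opens Q leQ" using X1 Y1 by blast
    moreover have "prod_le (\<subseteq>) (\<subseteq>) (Z k, T k) (X k, Y k)" unfolding prod_le_def Z_def T_def by auto
    ultimately have "(X k, Y k) \<in> W" using scott_upper[OF W] by blast
    then show False using XYW by blast
  qed
  have monoZ: "\<And>k j. k \<le> j \<Longrightarrow> Z k \<subseteq> Z j" unfolding Z_def by auto
  have monoT: "\<And>k j. k \<le> j \<Longrightarrow> T k \<subseteq> T j" unfolding T_def by auto
  define \<D> where "\<D> = range (\<lambda>k. (Z k, T k))"
  have Dsub: "\<D> \<subseteq> scott_opens P leP \<times> scott_opens Q leQ" unfolding \<D>_def using Z1 T1 by blast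
  have dir: "directed_in (scott_opens P leP \<times> scott_opens Q leQ) (prod_le (\<subseteq>) (\<subseteq>)) \<D>"
    unfolding directed_in_def
  proof (intro conjI Dsub)
    show "\<D> \<noteq> {}" unfolding \<D>_def by blast
    show "\<forall>x\<in>\<D>. \<forall>y\<in>\<D>. \<exists>z\<in>\<D>. prod_le (\<subseteq>) (\<subseteq>) x z \<and> prod_le (\<subseteq>) (\<subseteq>) y z"
    proof (intro ballI)
      fix x y assume "x \<in> \<D>" "y \<in> \<D>"
      then obtain i j where ij: "x = (Z i, T i)" "y = (Z j, T j)" unfolding \<D>_def by blast
      have "(Z (max i j), T (max i j)) \<in> \<D>" unfolding \<D>_def by blast
      moreover have "prod_le (\<subseteq>) (\<subseteq>) x (Z (max i j), T (max i j))"
        unfolding ij prod_le_def using monoZ[of i "max i j"] monoT[of i "max i j"] by simp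
      moreover have "prod_le (\<subseteq>) (\<subseteq>) y (Z (max i j), T (max i j))"
        unfolding ij prod_le_def using monoZ[of j "max i j"] monoT[of j "max i j"] by simp
      ultimately show "\<exists>z\<in>\<D>. prod_le (\<subseteq>) (\<subseteq>) x z \<and> prod_le (\<subseteq>) (\<subseteq>) y z" by blast
    qed
  qed
  have U1: "\<Union>(fst ` \<D>) = C"
  proof
    show "\<Union>(fst ` \<D>) \<subseteq> C" unfolding \<D>_def Z_def by auto
    show "C \<subseteq> \<Union>(fst ` \<D>)"
    proof
      fix a assume a: "a \<in> C"
      have "a \<in> Z (Suc (to_nat_on C a))"
        unfolding Z_def using a Fn_mem[OF a] X2 by blast
      then show "a \<in> \<Union>(fst ` \<D>)" unfolding \<D>_def by auto
    qed
  qed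
  have U2: "\<Union>(snd ` \<D>) = C'"
  proof
    show "\<Union>(snd ` \<D>) \<subseteq> C'" unfolding \<D>_def T_def by auto
    show "C' \<subseteq> \<Union>(snd ` \<D>)"
    proof
      fix a assume a: "a \<in> C'"
      have "a \<in> T (Suc (to_nat_on C' a))"
        unfolding T_def using a Fn_mem[OF a] Y2 by blast
      then show "a \<in> \<Union>(snd ` \<D>)" unfolding \<D>_def by auto
    qed
  qed
  have sup: "is_sup_in (scott_opens P leP \<times> scott_opens Q leQ) (prod_le (\<subseteq>) (\<subseteq>)) \<D> (C, C')"
    using prod_sup[OF Dsub] unfolding U1 U2 .
  obtain d where "d \<in> \<D>" "d \<in> W" using scott_dir[OF W dir sup CW] by blast
  then show False using ZT unfolding \<D>_def by blast
qed

lemma approx: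
  assumes om: "omega_type (scott_topology P le)" and A: "A \<in> scott_opens P le" and a: "a \<in> A"
  shows "\<exists>C\<in>scott_opens P le. countable C \<and> a \<in> C \<and> C \<subseteq> A"
proof -
  obtain S where S: "\<forall>s\<in>S. countable s" "scott_topology P le = topology_generated_by S"
    using om unfolding omega_type_def by blast
  have eq: "scott_open_in P le U \<longleftrightarrow> generate_topology_on S U" for U
  proof -
    have "scott_open_in P le U = openin (scott_topology P le) U" by (simp add: openin_scott)
    also have "\<dots> = openin (topology_generated_by S) U" using S(2) by simp
    also have "\<dots> = generate_topology_on S U" by (rule openin_topology_generated_by_iff)
    finally show ?thesis .
  qed
  have gen: "generate_topology_on S U \<Longrightarrow> \<forall>a\<in>U. \<exists>C. generate_topology_on S C \<and> countable C \<and> a \<in> C \<and> C \<subseteq> U" for U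
  proof (induction rule: generate_topology_on.induct)
    case Empty
    then show ?case by blast
  next
    case (Int a b)
    show ?case
    proof
      fix x assume "x \<in> a \<inter> b"
      then obtain C1 C2 where "generate_topology_on S C1" "countable C1" "x \<in> C1" "C1 \<subseteq> a"
        "generate_topology_on S C2" "countable C2" "x \<in> C2" "C2 \<subseteq> b"
        using Int.IH by blast
      then show "\<exists>C. generate_topology_on S C \<and> countable C \<and> x \<in> C \<and> C \<subseteq> a \<inter> b"
        by (intro exI[of _ "C1 \<inter> C2"]) (auto intro: generate_topology_on.Int)
    qed
  next
    case (UN K)
    show ?case
    proof
      fix x assume "x \<in> \<Union>K"
      then obtain k where "k \<in> K" "x \<in> k" by blast
      then show "\<exists>C. generate_topology_on S C \<and> countable C \<and> x \<in> C \<and> C \<subseteq> \<Union>K"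
        using UN.IH by blast
    qed
  next
    case (Basis s)
    then show ?case using S(1) by (blast intro: generate_topology_on.Basis)
  qed
  have "generate_topology_on S A" using A eq unfolding scott_opens_def by blast
  then obtain C where "generate_topology_on S C" "countable C" "a \<in> C" "C \<subseteq> A"
    using gen a by blast
  then show ?thesis using eq unfolding scott_opens_def by blast
qed


lemma Lsub_union:
  assumes om: "omega_type (scott_topology P le)" and A: "A \<in> scott_opens P le"
  shows "\<Union>{C \<in> scott_opens P le. countable C \<and> C \<subseteq> A} = A"
proof
  show "\<Union>{C \<in> scott_opens P le. countable C \<and> C \<subseteq> A} \<subseteq> A" by blast
  show "A \<subseteq> \<Union>{C \<in> scott_opens P le. countable C \<and> C \<subseteq> A}"
  proof
    fix a assume "a \<in> A"
    then obtain C where "C \<in> scott_opens P le" "countable C" "a \<in> C" "C \<subseteq> A"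
      using approx[OF om A] by blast
    then show "a \<in> \<Union>{C \<in> scott_opens P le. countable C \<and> C \<subseteq> A}" by blast
  qed
qed

lemma reduce1:
  assumes om: "omega_type (scott_topology P leP)"
    and W: "scott_open_in (scott_opens P leP \<times> scott_opens Q leQ) (prod_le (\<subseteq>) (\<subseteq>)) W"
    and AB: "(A, B) \<in> W"
  shows "\<exists>C\<in>scott_opens P leP. countable C \<and> C \<subseteq> A \<and> (C, B) \<in> W"
proof -
  have "(A, B) \<in> scott_opens P leP \<times> scott_opens Q leQ" using scott_sub[OF W] AB by (rule subsetD)
  then have ABL: "A \<in> scott_opens P leP" "B \<in> scott_opens Q leQ" by simp_all
  define G where "G = {C \<in> scott_opens P leP. countable C \<and> C \<subseteq> A}"
  define \<D> where "\<D> = (\<lambda>C. (C, B)) ` G"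
  have eG: "{} \<in> G" unfolding G_def using L_empty by simp
  have Dsub: "\<D> \<subseteq> scott_opens P leP \<times> scott_opens Q leQ"
    unfolding \<D>_def image_subset_iff G_def using ABL by simp
  have dir: "directed_in (scott_opens P leP \<times> scott_opens Q leQ) (prod_le (\<subseteq>) (\<subseteq>)) \<D>"
    unfolding directed_in_def
  proof (intro conjI Dsub)
    show "\<D> \<noteq> {}" unfolding \<D>_def using eG by blast
    show "\<forall>x\<in>\<D>. \<forall>y\<in>\<D>. \<exists>z\<in>\<D>. prod_le (\<subseteq>) (\<subseteq>) x z \<and> prod_le (\<subseteq>) (\<subseteq>) y z"
    proof (intro ballI)
      fix x y assume "x \<in> \<D>" "y \<in> \<D>"
      then obtain C1 C2 where c: "C1 \<in> G" "C2 \<in> G" "x = (C1, B)" "y = (C2, B)" unfolding \<D>_def by blast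
      have "C1 \<union> C2 \<in> G" using c(1,2) L_Un[of C1 _ _ C2] unfolding G_def by simp
      then have "(C1 \<union> C2, B) \<in> \<D>" unfolding \<D>_def by blast
      moreover have "prod_le (\<subseteq>) (\<subseteq>) x (C1 \<union> C2, B)" "prod_le (\<subseteq>) (\<subseteq>) y (C1 \<union> C2, B)"
        unfolding c prod_le_def by auto
      ultimately show "\<exists>z\<in>\<D>. prod_le (\<subseteq>) (\<subseteq>) x z \<and> prod_le (\<subseteq>) (\<subseteq>) y z" by blast
    qed
  qed
  have u1: "\<Union>(fst ` \<D>) = A"
  proof -
    have "fst ` \<D> = G" unfolding \<D>_def by (simp add: image_image)
    then show ?thesis using Lsub_union[OF om ABL(1)] unfolding G_def by simp
  qed
  have u2: "\<Union>(snd ` \<D>) = B" unfolding \<D>_def using eG by auto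
  have sup: "is_sup_in (scott_opens P leP \<times> scott_opens Q leQ) (prod_le (\<subseteq>) (\<subseteq>)) \<D> (A, B)"
    using prod_sup[OF Dsub] unfolding u1 u2 .
  obtain d where "d \<in> \<D>" "d \<in> W" using scott_dir[OF W dir sup AB] by blast
  then obtain C where "C \<in> G" "(C, B) \<in> W" unfolding \<D>_def by blast
  then show ?thesis unfolding G_def by blast
qed

lemma reduce2:
  assumes om: "omega_type (scott_topology Q leQ)"
    and W: "scott_open_in (scott_opens P leP \<times> scott_opens Q leQ) (prod_le (\<subseteq>) (\<subseteq>)) W"
    and AB: "(A, B) \<in> W"
  shows "\<exists>C\<in>scott_opens Q leQ. countable C \<and> C \<subseteq> B \<and> (A, C) \<in> W"
proof -
  have "(A, B) \<in> scott_opens P leP \<times> scott_opens Q leQ" using scott_sub[OF W] AB by (rule subsetD)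
  then have ABL: "A \<in> scott_opens P leP" "B \<in> scott_opens Q leQ" by simp_all
  define G where "G = {C \<in> scott_opens Q leQ. countable C \<and> C \<subseteq> B}"
  define \<D> where "\<D> = (\<lambda>C. (A, C)) ` G"
  have eG: "{} \<in> G" unfolding G_def using L_empty by simp
  have Dsub: "\<D> \<subseteq> scott_opens P leP \<times> scott_opens Q leQ"
    unfolding \<D>_def image_subset_iff G_def using ABL by simp
  have dir: "directed_in (scott_opens P leP \<times> scott_opens Q leQ) (prod_le (\<subseteq>) (\<subseteq>)) \<D>"
    unfolding directed_in_def
  proof (intro conjI Dsub)
    show "\<D> \<noteq> {}" unfolding \<D>_def using eG by blast
    show "\<forall>x\<in>\<D>. \<forall>y\<in>\<D>. \<exists>z\<in>\<D>. prod_le (\<subseteq>) (\<subseteq>) x z \<and> prod_le (\<subseteq>) (\<subseteq>) y z"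
    proof (intro ballI)
      fix x y assume "x \<in> \<D>" "y \<in> \<D>"
      then obtain C1 C2 where c: "C1 \<in> G" "C2 \<in> G" "x = (A, C1)" "y = (A, C2)" unfolding \<D>_def by blast
      have "C1 \<union> C2 \<in> G" using c(1,2) L_Un[of C1 _ _ C2] unfolding G_def by simp
      then have "(A, C1 \<union> C2) \<in> \<D>" unfolding \<D>_def by blast
      moreover have "prod_le (\<subseteq>) (\<subseteq>) x (A, C1 \<union> C2)" "prod_le (\<subseteq>) (\<subseteq>) y (A, C1 \<union> C2)"
        unfolding c prod_le_def by auto
      ultimately show "\<exists>z\<in>\<D>. prod_le (\<subseteq>) (\<subseteq>) x z \<and> prod_le (\<subseteq>) (\<subseteq>) y z" by blast
    qed
  qed
  have u2: "\<Union>(snd ` \<D>) = B"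
  proof -
    have "snd ` \<D> = G" unfolding \<D>_def by (simp add: image_image)
    then show ?thesis using Lsub_union[OF om ABL(2)] unfolding G_def by simp
  qed
  have u1: "\<Union>(fst ` \<D>) = A" unfolding \<D>_def using eG by auto
  have sup: "is_sup_in (scott_opens P leP \<times> scott_opens Q leQ) (prod_le (\<subseteq>) (\<subseteq>)) \<D> (A, B)"
    using prod_sup[OF Dsub] unfolding u1 u2 .
  obtain d where "d \<in> \<D>" "d \<in> W" using scott_dir[OF W dir sup AB] by blast
  then obtain C where "C \<in> G" "(A, C) \<in> W" unfolding \<D>_def by blast
  then show ?thesis unfolding G_def by blast
qed

theorem theorem4p8:
  fixes P :: "'a set" and leP :: "'a \<Rightarrow> 'a \<Rightarrow> bool"
    and Q :: "'b set" and leQ :: "'b \<Rightarrow> 'b \<Rightarrow> bool"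
  assumes "poset_on P leP" and "poset_on Q leQ"
    and "omega_type (scott_topology P leP)"
    and "omega_type (scott_topology Q leQ)"
  shows "prod_topology (scott_topology (scott_opens P leP) (\<subseteq>))
                       (scott_topology (scott_opens Q leQ) (\<subseteq>))
       = scott_topology (scott_opens P leP \<times> scott_opens Q leQ) (prod_le (\<subseteq>) (\<subseteq>))"
  unfolding topology_eq
proof (intro allI iffI)
  fix W
  assume "openin (prod_topology (scott_topology (scott_opens P leP) (\<subseteq>)) (scott_topology (scott_opens Q leQ) (\<subseteq>))) W"
  then show "openin (scott_topology (scott_opens P leP \<times> scott_opens Q leQ) (prod_le (\<subseteq>) (\<subseteq>))) W"
    unfolding openin_scott by (rule dir1)
next
  fix W
  assume "openin (scott_topology (scott_opens P leP \<times> scott_opens Q leQ) (prod_le (\<subseteq>) (\<subseteq>))) W"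
  then have W: "scott_open_in (scott_opens P leP \<times> scott_opens Q leQ) (prod_le (\<subseteq>) (\<subseteq>)) W"
    unfolding openin_scott .
  show "openin (prod_topology (scott_topology (scott_opens P leP) (\<subseteq>)) (scott_topology (scott_opens Q leQ) (\<subseteq>))) W"
    unfolding openin_prod_topology_alt openin_scott
  proof (intro allI impI)
    fix A B assume AB: "(A, B) \<in> W"
    have "(A, B) \<in> scott_opens P leP \<times> scott_opens Q leQ" using scott_sub[OF W] AB by (rule subsetD)
    then have ABL: "A \<in> scott_opens P leP" "B \<in> scott_opens Q leQ" by simp_all
    obtain C where C: "C \<in> scott_opens P leP" "countable C" "C \<subseteq> A" "(C, B) \<in> W"
      using reduce1[OF assms(3) W AB] by blast
    obtain C' where C': "C' \<in> scott_opens Q leQ" "countable C'" "C' \<subseteq> B" "(C, C') \<in> W"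
      using reduce2[OF assms(4) W C(4)] by blast
    obtain n where n: "{X \<in> scott_opens P leP. Fn C n \<subseteq> X} \<times> {Y \<in> scott_opens Q leQ. Fn C' n \<subseteq> Y} \<subseteq> W"
      using rect[OF assms(1,2) W C(1,2) C'(1,2) C'(4)] by blast
    have o1: "scott_open_in (scott_opens P leP) (\<subseteq>) {X \<in> scott_opens P leP. Fn C n \<subseteq> X}"
      using nbhd_open[OF Fn_finite[OF C(2)]] .
    have o2: "scott_open_in (scott_opens Q leQ) (\<subseteq>) {Y \<in> scott_opens Q leQ. Fn C' n \<subseteq> Y}"
      using nbhd_open[OF Fn_finite[OF C'(2)]] .
    have AU: "A \<in> {X \<in> scott_opens P leP. Fn C n \<subseteq> X}" using ABL(1) Fn_sub[of C n] C(3) by blast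
    have BV: "B \<in> {Y \<in> scott_opens Q leQ. Fn C' n \<subseteq> Y}" using ABL(2) Fn_sub[of C' n] C'(3) by blast
    show "\<exists>U V. scott_open_in (scott_opens P leP) (\<subseteq>) U \<and> scott_open_in (scott_opens Q leQ) (\<subseteq>) V \<and> A \<in> U \<and> B \<in> V \<and> U \<times> V \<subseteq> W"
      by (rule exI[of _ "{X \<in> scott_opens P leP. Fn C n \<subseteq> X}"], rule exI[of _ "{Y \<in> scott_opens Q leQ. Fn C' n \<subseteq> Y}"],
          intro conjI o1 o2 AU BV n)
  qed
qed

end
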